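(* Let $f:M^n\to\mathbb{R}^m$, $n\ge3$, be an umbilic-free isometric immersion with flat normal bundle, with distinct Moebius principal normal vector fields $\bar\eta_1,\dots,\bar\eta_k$, and suppose the Blaschke tensor satisfies $\psi(E_{\eta_i},E_{\eta_j})=0$ for $i\neq j$ and $\psi|_{E_{\eta_i}\times E_{\eta_i}}=\theta_i\langle\cdot,\cdot\rangle^*$ for functions $\theta_1,\dots,\theta_k$. Then $f$ has semi-parallel Moebius second fundamental form if and only if $$\langle\bar\eta_i,\bar\eta_j\rangle+\theta_i+\theta_j=0\quad\text{for all }1\le i\ne j\le k,$$ equivalently, if and only if $\langle R^*(X,Y)Y,X\rangle^*=0$ for all $X\in E_{\eta_i}$, $Y\in E_{\eta_j}$, $i\ne j$.
   Context: Let $f:M^n\to\mathbb{R}^{m}$ be an isometric immersion of a Riemannian manifold $(M^n,\langle\cdot,\cdot\rangle)$ with second fundamental form $\alpha$, mean curvature vector $\mathcal H=\frac1n\operatorname{tr}\alpha$ and normal connection $\nabla^\perp$ with curvature $R^\perp$. Put $\rho^2=\frac{n}{n-1}(\|\alpha\|^2-n\|\mathcal H\|^2)$; $f$ is umbilic-free if $\rho>0$ everywhere. The Moebius metric is $\langle\cdot,\cdot\rangle^*=\rho^2\langle\cdot,\cdot\rangle$, with Levi-Civita connection $\nabla^*$ and curvature $R^*$; the Moebius second fundamental form is $\beta=\rho(\alpha-\mathcal H\langle\cdot,\cdot\rangle)$. The Blaschke tensor is $\psi(X,Y)=\frac1\rho\langle\beta(X,Y),\mathcal H\rangle+\frac{1}{2\rho^2}(\|\operatorname{grad}^*\rho\|_*^2+\|\mathcal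 H\|^2)\langle X,Y\rangle^*-\frac1\rho\operatorname{Hess}^*\rho(X,Y)$, with gradient, norm and Hessian taken with respect to $\langle\cdot,\cdot\rangle^*$. $f$ has semi-parallel Moebius second fundamental form if $R^\perp(X,Y)\beta(Z,W)-\beta(R^*(X,Y)Z,W)-\beta(Z,R^*(X,Y)W)=0$ for all tangent $X,Y,Z,W$. $f$ has flat normal bundle if $R^\perp=0$; then there are pairwise distinct normal vector fields $\eta_1,\dots,\eta_k$ (principal normal vector fields) and an orthogonal decomposition $TM=E_{\eta_1}\oplus\cdots\oplus E_{\eta_k}$ with $\alpha(X,Y)=\langle X,Y\rangle\eta_i$ for $X\in E_{\eta_i}$, $Y\in TM$. The Moebius principal normal vector fields are $\bar\eta_i=\rho^{-1}(\eta_i-\mathcal H)$, so $\beta(X,Y)=\langle X,Y\rangle^*\bar\eta_i$ for $X\in E_{\eta_i}$. The conformal Gauss equation reads $\langle R^*(X,Y)Z,W\rangle^*=\langle\beta(X,W),\beta(Y,Z)\rangle-\langle\beta(X,Z),\beta(Y,W)\rangle+\psi(X,W)\langle Y,Z\rangle^*+\psi(Y,Z)\langle X,W\rangle^*-\psi(X,Z)\langle Y,W\rangle^*-\psi(Y,W)\langle X,Z\rangle^*$. *)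

theory Defs
  imports "HOL-Analysis.Analysis"
begin

text \<open>At a point p of M the tangent space, equipped with the
Moebius metric, is identified (via a Moebius-orthonormal frame) with a Euclidean
space of type 'v, and the normal space (with the Euclidean metric of R^m) with a
Euclidean space of type 'w.
R is the curvature R^* of the Moebius metric, Rperp the normal curvature,
beta the Moebius second fundamental form.\<close>

definition semi_parallel_at ::
  "('v::real_inner \<Rightarrow> 'v \<Rightarrow> 'v \<Rightarrow> 'v) \<Rightarrow> ('v \<Rightarrow> 'v \<Rightarrow> 'w::real_inner \<Rightarrow> 'w)
     \<Rightarrow> ('v \<Rightarrow> 'v \<Rightarrow> 'w) \<Rightarrow> bool" where
  "semi_parallel_at R Rperp \<beta> \<longleftrightarrow>
     (\<forall>X Y Z W. Rperp X Y (\<beta> Z W) - \<beta> (R X Y Z) W - \<beta> Z (R X Y W) = 0)"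

end

theory Submission
  imports Defs
begin

lemma inner_uniq:
  fixes a b :: "'v::real_inner"
  assumes "\<And>W. inner a W = inner b W"
  shows "a = b"
proof -
  have "inner (a - b) (a - b) = 0" using assms[of "a-b"] by (simp add: inner_diff_left)
  then show ?thesis by simp
qed

lemma span_all:
  assumes "span (\<Union>i\<in>I. E i) = UNIV" "subspace S" "\<And>i. i \<in> I \<Longrightarrow> E i \<subseteq> S"
  shows "x \<in> S"
proof -
  have "span (\<Union>i\<in>I. E i) \<subseteq> S" using assms by (intro span_minimal) auto
  then show ?thesis using assms(1) by auto
qed

lemma nz:
  assumes "subspace S \<and> S \<noteq> {0}"
  shows "\<exists>X. X \<in> S \<and> X \<noteq> 0"
proof -
  have "0 \<in> S" using assms subspace_0 by blast
  then show ?thesis using assms by blast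
qed

lemma pw:
  fixes b :: "'v::euclidean_space \<Rightarrow> 'v \<Rightarrow> 'w::euclidean_space"
    and ps :: "'v \<Rightarrow> 'v \<Rightarrow> real"
    and Rc :: "'v \<Rightarrow> 'v \<Rightarrow> 'v \<Rightarrow> 'v"
    and Rp :: "'v \<Rightarrow> 'v \<Rightarrow> 'w \<Rightarrow> 'w"
    and E :: "nat \<Rightarrow> 'v set" and eta :: "nat \<Rightarrow> 'w" and th :: "nat \<Rightarrow> real"
  assumes flat: "\<forall>X Y \<xi>. Rp X Y \<xi> = 0"
    and bb: "bilinear b"
    and bs: "\<forall>X Y. b X Y = b Y X"
    and pb: "bilinear ps"
    and pss: "\<forall>X Y. ps X Y = ps Y X"
    and gauss: "\<forall>X Y Z W.
        inner (Rc X Y Z) W =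
          inner (b X W) (b Y Z) - inner (b X Z) (b Y W)
          + ps X W * inner Y Z + ps Y Z * inner X W
          - ps X Z * inner Y W - ps Y W * inner X Z"
    and Esub: "\<forall>i\<in>{1..k}. subspace (E i) \<and> E i \<noteq> {0}"
    and Eorth: "\<forall>i\<in>{1..k}. \<forall>j\<in>{1..k}. i \<noteq> j \<longrightarrow>
        (\<forall>X\<in>E i. \<forall>Y\<in>E j. inner X Y = 0)"
    and Espan: "span (\<Union>i\<in>{1..k}. E i) = UNIV"
    and dist: "\<forall>i\<in>{1..k}. \<forall>j\<in>{1..k}. i \<noteq> j \<longrightarrow> eta i \<noteq> eta j"
    and bE: "\<forall>i\<in>{1..k}. \<forall>X\<in>E i. \<forall>Y. b X Y = inner X Y *\<^sub>R eta i"
    and poff: "\<forall>i\<in>{1..k}. \<forall>j\<in>{1..k}. i \<noteq> j \<longrightarrow>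
        (\<forall>X\<in>E i. \<forall>Y\<in>E j. ps X Y = 0)"
    and pdiag: "\<forall>i\<in>{1..k}. \<forall>X\<in>E i. \<forall>Y\<in>E i. ps X Y = th i * inner X Y"
  shows "(semi_parallel_at Rc Rp b \<longleftrightarrow>
           (\<forall>i\<in>{1..k}. \<forall>j\<in>{1..k}. i \<noteq> j \<longrightarrow>
              inner (eta i) (eta j) + th i + th j = 0))
       \<and> ((\<forall>i\<in>{1..k}. \<forall>j\<in>{1..k}. i \<noteq> j \<longrightarrow>
              inner (eta i) (eta j) + th i + th j = 0) \<longleftrightarrow>
           (\<forall>i\<in>{1..k}. \<forall>j\<in>{1..k}. i \<noteq> j \<longrightarrow>
              (\<forall>X\<in>E i. \<forall>Y\<in>E j. inner (Rc X Y Y) X = 0)))"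
proof -
  define c where "c i j = inner (eta i) (eta j) + th i + th j" for i j
  have psiL: "ps X W = th a * inner X W" if a: "a \<in> {1..k}" and X: "X \<in> E a" for a X W
  proof -
    have "W \<in> {W. ps X W = th a * inner X W}"
    proof (rule span_all[OF Espan])
      show "subspace {W. ps X W = th a * inner X W}"
        by (auto simp: subspace_def bilinear_rzero[OF pb] bilinear_radd[OF pb]
            bilinear_rmul[OF pb] inner_add_right algebra_simps)
      fix i assume i: "i \<in> {1..k}"
      show "E i \<subseteq> {W. ps X W = th a * inner X W}"
      proof
        fix Y assume Y: "Y \<in> E i"
        show "Y \<in> {W. ps X W = th a * inner X W}"
        proof (cases "i = a")
          case True then show ?thesis using pdiag a X Y by auto
        next
          case False then show ?thesis using poff Eorth a X Y i by fastforce
        qed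
      qed
    qed
    then show ?thesis by simp
  qed
  have Rf: "Rc X Y Z = c a a' *\<^sub>R (inner Y Z *\<^sub>R X - inner X Z *\<^sub>R Y)"
    if a: "a \<in> {1..k}" and a': "a' \<in> {1..k}" and X: "X \<in> E a" and Y: "Y \<in> E a'" for a a' X Y Z
  proof (rule inner_uniq)
    fix W
    have "b Y Z = inner Y Z *\<^sub>R eta a'" "b Y W = inner Y W *\<^sub>R eta a'"
      "b X Z = inner X Z *\<^sub>R eta a" "b X W = inner X W *\<^sub>R eta a"
      using bE a a' X Y by auto
    moreover have "ps X W = th a * inner X W" "ps X Z = th a * inner X Z"
      "ps Y W = th a' * inner Y W" "ps Y Z = th a' * inner Y Z"
      using psiL a a' X Y by auto
    ultimately show "inner (Rc X Y Z) W = inner (c a a' *\<^sub>R (inner Y Z *\<^sub>R X - inner X Z *\<^sub>R Y)) W"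
      using gauss[rule_format, of X Y Z W] by (simp add: c_def inner_diff_left algebra_simps)
  qed
  have RaddX: "Rc (X1 + X2) Y Z = Rc X1 Y Z + Rc X2 Y Z" for X1 X2 Y Z
    by (rule inner_uniq) (simp add: gauss inner_add_left bilinear_ladd[OF bb] bilinear_ladd[OF pb] algebra_simps)
  have RmulX: "Rc (r *\<^sub>R X) Y Z = r *\<^sub>R Rc X Y Z" for r X Y Z
    by (rule inner_uniq) (simp add: gauss bilinear_lmul[OF bb] bilinear_lmul[OF pb] algebra_simps)
  have RaddY: "Rc X (Y1 + Y2) Z = Rc X Y1 Z + Rc X Y2 Z" for Y1 Y2 X Z
    by (rule inner_uniq) (simp add: gauss inner_add_left bilinear_ladd[OF bb] bilinear_ladd[OF pb] algebra_simps)
  have RmulY: "Rc X (r *\<^sub>R Y) Z = r *\<^sub>R Rc X Y Z" for r X Y Z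
    by (rule inner_uniq) (simp add: gauss bilinear_lmul[OF bb] bilinear_lmul[OF pb] algebra_simps)
  have sec: "inner (Rc X Y Y) X = (inner X X * inner Y Y) * c i j"
    if i: "i \<in> {1..k}" and j: "j \<in> {1..k}" and ij: "i \<noteq> j" and X: "X \<in> E i" and Y: "Y \<in> E j" for i j X Y
  proof -
    have "inner X Y = 0" using Eorth i j ij X Y by auto
    then show ?thesis using Rf[OF i j X Y, of Y] by (simp add: inner_commute algebra_simps)
  qed
  have part2: "(\<forall>i\<in>{1..k}. \<forall>j\<in>{1..k}. i \<noteq> j \<longrightarrow> c i j = 0) \<longleftrightarrow>
           (\<forall>i\<in>{1..k}. \<forall>j\<in>{1..k}. i \<noteq> j \<longrightarrow>
              (\<forall>X\<in>E i. \<forall>Y\<in>E j. inner (Rc X Y Y) X = 0))"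
  proof safe
    fix i j X Y assume "\<forall>i\<in>{1..k}. \<forall>j\<in>{1..k}. i \<noteq> j \<longrightarrow> c i j = 0"
      "i \<in> {1..k}" "j \<in> {1..k}" "i \<noteq> j" "X \<in> E i" "Y \<in> E j"
    then show "inner (Rc X Y Y) X = 0" using sec by simp
  next
    fix i j assume H: "\<forall>i\<in>{1..k}. \<forall>j\<in>{1..k}. i \<noteq> j \<longrightarrow> (\<forall>X\<in>E i. \<forall>Y\<in>E j. inner (Rc X Y Y) X = 0)"
      and i: "i \<in> {1..k}" and j: "j \<in> {1..k}" and ij: "i \<noteq> j"
    obtain X where X: "X \<in> E i" "X \<noteq> 0" using nz[of "E i"] Esub i by auto
    obtain Y where Y: "Y \<in> E j" "Y \<noteq> 0" using nz[of "E j"] Esub j by auto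
    have "(inner X X * inner Y Y) * c i j = 0" using H sec[OF i j ij X(1) Y(1)] i j ij X Y by auto
    then show "c i j = 0" using X Y by simp
  qed
  have part1: "semi_parallel_at Rc Rp b \<longleftrightarrow> (\<forall>i\<in>{1..k}. \<forall>j\<in>{1..k}. i \<noteq> j \<longrightarrow> c i j = 0)"
  proof
    assume sp: "semi_parallel_at Rc Rp b"
    show "\<forall>i\<in>{1..k}. \<forall>j\<in>{1..k}. i \<noteq> j \<longrightarrow> c i j = 0"
    proof (intro ballI impI)
      fix i j assume i: "i \<in> {1..k}" and j: "j \<in> {1..k}" and ij: "i \<noteq> j"
      obtain X where X: "X \<in> E i" "X \<noteq> 0" using nz[of "E i"] Esub i by auto
      obtain Y where Y: "Y \<in> E j" "Y \<noteq> 0" using nz[of "E j"] Esub j by auto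
      have o: "inner X Y = 0" using Eorth i j ij X Y by auto
      have e: "b (Rc X Y X) Y + b X (Rc X Y Y) = 0"
      proof -
        have "Rp X Y (b X Y) - b (Rc X Y X) Y - b X (Rc X Y Y) = 0"
          using sp unfolding semi_parallel_at_def by blast
        then have "- b (Rc X Y X) Y - b X (Rc X Y Y) = 0" using flat by simp
        moreover have "b (Rc X Y X) Y + b X (Rc X Y Y) = - (- b (Rc X Y X) Y - b X (Rc X Y Y))"
          by (simp add: algebra_simps)
        ultimately show ?thesis by simp
      qed
      have r1: "Rc X Y X = (- (c i j * inner X X)) *\<^sub>R Y" using Rf[OF i j X(1) Y(1), of X] o
        by (simp add: inner_commute)
      have r2: "Rc X Y Y = (c i j * inner Y Y) *\<^sub>R X" using Rf[OF i j X(1) Y(1), of Y] o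
        by (simp add: inner_commute)
      have bY: "b Y V = inner Y V *\<^sub>R eta j" for V using bE j Y by auto
      have bX: "b X V = inner X V *\<^sub>R eta i" for V using bE i X by auto
      have "b (Rc X Y X) Y = b Y (Rc X Y X)" using bs by auto
      also have "\<dots> = (- (c i j * inner X X) * inner Y Y) *\<^sub>R eta j"
        unfolding bY r1 by simp
      finally have "b (Rc X Y X) Y = (- (c i j * inner X X) * inner Y Y) *\<^sub>R eta j" .
      moreover have "b X (Rc X Y Y) = (c i j * inner Y Y * inner X X) *\<^sub>R eta i"
        unfolding bX r2 by (simp add: inner_commute)
      ultimately have "(c i j * inner X X * inner Y Y) *\<^sub>R (eta i - eta j) = 0"
        using e by (simp add: algebra_simps)
      then show "c i j = 0" using X Y dist i j ij by simp
    qed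
  next
    assume C: "\<forall>i\<in>{1..k}. \<forall>j\<in>{1..k}. i \<noteq> j \<longrightarrow> c i j = 0"
    show "semi_parallel_at Rc Rp b"
      unfolding semi_parallel_at_def
    proof (intro allI)
      fix X Y Z W
      define T where "T X Y = b (Rc X Y Z) W + b Z (Rc X Y W)" for X Y
      have base: "T X Y = 0" if a: "a \<in> {1..k}" and a': "a' \<in> {1..k}" and X: "X \<in> E a" and Y: "Y \<in> E a'" for a a' X Y
      proof (cases "a = a'")
        case True
        have bX: "b X V = inner X V *\<^sub>R eta a" for V using bE a X by auto
        have bY: "b Y V = inner Y V *\<^sub>R eta a" for V using bE a' Y True by auto
        have "b (Rc X Y Z) W = c a a' *\<^sub>R (inner Y Z *\<^sub>R b X W - inner X Z *\<^sub>R b Y W)"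
          unfolding Rf[OF a a' X Y, of Z] by (simp add: bilinear_lmul[OF bb] bilinear_lsub[OF bb])
        also have "\<dots> = (c a a' * (inner Y Z * inner X W - inner X Z * inner Y W)) *\<^sub>R eta a"
          unfolding bX bY by (simp add: algebra_simps)
        finally have 1: "b (Rc X Y Z) W = (c a a' * (inner Y Z * inner X W - inner X Z * inner Y W)) *\<^sub>R eta a" .
        have "b Z (Rc X Y W) = b (Rc X Y W) Z" using bs by auto
        also have "\<dots> = c a a' *\<^sub>R (inner Y W *\<^sub>R b X Z - inner X W *\<^sub>R b Y Z)"
          unfolding Rf[OF a a' X Y, of W] by (simp add: bilinear_lmul[OF bb] bilinear_lsub[OF bb])
        also have "\<dots> = (c a a' * (inner Y W * inner X Z - inner X W * inner Y Z)) *\<^sub>R eta a"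
          unfolding bX bY by (simp add: algebra_simps)
        finally have 2: "b Z (Rc X Y W) = (c a a' * (inner Y W * inner X Z - inner X W * inner Y Z)) *\<^sub>R eta a" .
        have "T X Y = (c a a' * (inner Y Z * inner X W - inner X Z * inner Y W) + c a a' * (inner Y W * inner X Z - inner X W * inner Y Z)) *\<^sub>R eta a"
          unfolding T_def 1 2 by (simp add: scaleR_add_left)
        also have "\<dots> = 0" by (simp add: algebra_simps)
        finally show ?thesis .
      next
        case False
        then have "c a a' = 0" using C a a' by auto
        then show ?thesis unfolding T_def using Rf[OF a a' X Y]
          by (simp add: bilinear_lzero[OF bb] bilinear_rzero[OF bb])
      qed
      have TaddX: "T (x1 + x2) y = T x1 y + T x2 y" for x1 x2 y
        unfolding T_def by (simp add: RaddX bilinear_ladd[OF bb] bilinear_radd[OF bb] algebra_simps)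
      have TmulX: "T (r *\<^sub>R x) y = r *\<^sub>R T x y" for r x y
        unfolding T_def by (simp add: RmulX bilinear_lmul[OF bb] bilinear_rmul[OF bb] scaleR_add_right)
      have T0X: "T 0 y = 0" for y using TmulX[of 0 0 y] by simp
      have TaddY: "T x (y1 + y2) = T x y1 + T x y2" for y1 y2 x
        unfolding T_def by (simp add: RaddY bilinear_ladd[OF bb] bilinear_radd[OF bb] algebra_simps)
      have TmulY: "T x (r *\<^sub>R y) = r *\<^sub>R T x y" for r x y
        unfolding T_def by (simp add: RmulY bilinear_lmul[OF bb] bilinear_rmul[OF bb] scaleR_add_right)
      have T0Y: "T x 0 = 0" for x using TmulY[of x 0 0] by simp
      have step1: "T X Y = 0" if a': "a' \<in> {1..k}" and Y: "Y \<in> E a'" for a' X Y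
      proof -
        have "X \<in> {X. T X Y = 0}"
        proof (rule span_all[OF Espan])
          show "subspace {X. T X Y = 0}"
            by (auto simp: subspace_def TaddX TmulX T0X)
        qed (use base a' Y in auto)
        then show ?thesis by simp
      qed
      have "Y \<in> {Y. T X Y = 0}"
      proof (rule span_all[OF Espan])
        show "subspace {Y. T X Y = 0}"
          by (auto simp: subspace_def TaddY TmulY T0Y)
      qed (use step1 in auto)
      then have h: "b (Rc X Y Z) W + b Z (Rc X Y W) = 0" by (simp add: T_def)
      have "Rp X Y (b Z W) - b (Rc X Y Z) W - b Z (Rc X Y W) = - (b (Rc X Y Z) W + b Z (Rc X Y W))"
        using flat by (simp add: algebra_simps)
      also have "\<dots> = 0" by (simp only: h minus_zero)
      finally show "Rp X Y (b Z W) - b (Rc X Y Z) W - b Z (Rc X Y W) = 0" .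
    qed
  qed
  show ?thesis using part1 part2 by (simp add: c_def)
qed


theorem lemma2p1:
  fixes M :: "'p set" and k :: nat
    and beta :: "'p \<Rightarrow> 'v::euclidean_space \<Rightarrow> 'v \<Rightarrow> 'w::euclidean_space"
    and psi :: "'p \<Rightarrow> 'v \<Rightarrow> 'v \<Rightarrow> real"
    and R :: "'p \<Rightarrow> 'v \<Rightarrow> 'v \<Rightarrow> 'v \<Rightarrow> 'v"
    and Rperp :: "'p \<Rightarrow> 'v \<Rightarrow> 'v \<Rightarrow> 'w \<Rightarrow> 'w"
    and E :: "'p \<Rightarrow> nat \<Rightarrow> 'v set"
    and etabar :: "'p \<Rightarrow> nat \<Rightarrow> 'w"
    and theta :: "'p \<Rightarrow> nat \<Rightarrow> real"
  assumes dim: "DIM('v) \<ge> 3"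
    and flat: "\<forall>p\<in>M. \<forall>X Y \<xi>. Rperp p X Y \<xi> = 0"
    and beta_bil: "\<forall>p\<in>M. bilinear (beta p)"
    and beta_sym: "\<forall>p\<in>M. \<forall>X Y. beta p X Y = beta p Y X"
    and psi_bil: "\<forall>p\<in>M. bilinear (psi p)"
    and psi_sym: "\<forall>p\<in>M. \<forall>X Y. psi p X Y = psi p Y X"
    and gauss: "\<forall>p\<in>M. \<forall>X Y Z W.
        inner (R p X Y Z) W =
          inner (beta p X W) (beta p Y Z) - inner (beta p X Z) (beta p Y W)
          + psi p X W * inner Y Z + psi p Y Z * inner X W
          - psi p X Z * inner Y W - psi p Y W * inner X Z"
    and E_sub: "\<forall>p\<in>M. \<forall>i\<in>{1..k}. subspace (E p i) \<and> E p i \<noteq> {0}"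
    and E_orth: "\<forall>p\<in>M. \<forall>i\<in>{1..k}. \<forall>j\<in>{1..k}. i \<noteq> j \<longrightarrow>
        (\<forall>X\<in>E p i. \<forall>Y\<in>E p j. inner X Y = 0)"
    and E_span: "\<forall>p\<in>M. span (\<Union>i\<in>{1..k}. E p i) = UNIV"
    and eta_distinct: "\<forall>p\<in>M. \<forall>i\<in>{1..k}. \<forall>j\<in>{1..k}. i \<noteq> j \<longrightarrow> etabar p i \<noteq> etabar p j"
    and beta_E: "\<forall>p\<in>M. \<forall>i\<in>{1..k}. \<forall>X\<in>E p i. \<forall>Y. beta p X Y = inner X Y *\<^sub>R etabar p i"
    and psi_off: "\<forall>p\<in>M. \<forall>i\<in>{1..k}. \<forall>j\<in>{1..k}. i \<noteq> j \<longrightarrow>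
        (\<forall>X\<in>E p i. \<forall>Y\<in>E p j. psi p X Y = 0)"
    and psi_diag: "\<forall>p\<in>M. \<forall>i\<in>{1..k}. \<forall>X\<in>E p i. \<forall>Y\<in>E p i.
        psi p X Y = theta p i * inner X Y"
  shows "((\<forall>p\<in>M. semi_parallel_at (R p) (Rperp p) (beta p)) \<longleftrightarrow>
           (\<forall>p\<in>M. \<forall>i\<in>{1..k}. \<forall>j\<in>{1..k}. i \<noteq> j \<longrightarrow>
              inner (etabar p i) (etabar p j) + theta p i + theta p j = 0))
       \<and> ((\<forall>p\<in>M. semi_parallel_at (R p) (Rperp p) (beta p)) \<longleftrightarrow>
           (\<forall>p\<in>M. \<forall>i\<in>{1..k}. \<forall>j\<in>{1..k}. i \<noteq> j \<longrightarrow>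
              (\<forall>X\<in>E p i. \<forall>Y\<in>E p j. inner (R p X Y Y) X = 0)))"
proof -
  have H: "(semi_parallel_at (R p) (Rperp p) (beta p) \<longleftrightarrow>
           (\<forall>i\<in>{1..k}. \<forall>j\<in>{1..k}. i \<noteq> j \<longrightarrow>
              inner (etabar p i) (etabar p j) + theta p i + theta p j = 0))
       \<and> ((\<forall>i\<in>{1..k}. \<forall>j\<in>{1..k}. i \<noteq> j \<longrightarrow>
              inner (etabar p i) (etabar p j) + theta p i + theta p j = 0) \<longleftrightarrow>
           (\<forall>i\<in>{1..k}. \<forall>j\<in>{1..k}. i \<noteq> j \<longrightarrow>
              (\<forall>X\<in>E p i. \<forall>Y\<in>E p j. inner (R p X Y Y) X = 0)))" if p: "p \<in> M" for p
    by (rule pw) (use p assms in auto)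
  show ?thesis using H by blast
qed

end
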